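(* Let $n$ be a positive integer and $\alpha_0,\alpha_1,\dots,\alpha_n$ non-negative integers. Then $$\det_{0\le i,j\le n-1}\bigl(C_{\alpha_i+j}+C_{\alpha_{i+1}+j}\bigr)=\prod_{0\le i<j\le n}(\alpha_j-\alpha_i)\prod_{i=0}^{n-1}\frac{(i+n)!}{(2i)!}\prod_{i=0}^{n}\frac{(2\alpha_i)!}{\alpha_i!\,(\alpha_i+n)!}\times\sum_{s=0}^{n}\frac{\alpha_s!\,(\alpha_s+n)!}{(2\alpha_s)!\prod_{j=0}^{s-1}(\alpha_s-\alpha_j)\prod_{j=s+1}^{n}(\alpha_j-\alpha_s)}.$$
   Context: $C_m=\frac{1}{m+1}\binom{2m}{m}$ denotes the $m$-th Catalan number. *)

theory Defs
  imports Complex_Main "Jordan_Normal_Form.Determinant"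
begin

definition catalan :: "nat \<Rightarrow> rat" where
  "catalan m = (1 / of_nat (m + 1)) * of_nat ((2 * m) choose m)"

end

theory Submission
  imports Defs
begin

definition vand :: "nat \<Rightarrow> (nat \<Rightarrow> 'a::comm_ring_1) \<Rightarrow> 'a" where
  "vand n x = (\<Prod>j<n. \<Prod>i<j. x j - x i)"

lemma sum_two_delta:
  fixes f :: "nat \<Rightarrow> 'a::comm_ring_1"
  assumes "m < N"
  shows "(\<Sum>i<N. f i * (if i = m then 1 else if Suc i = m then c else 0))
       = f m + (if m > 0 then c * f (m - 1) else 0)"
proof -
  have "(\<Sum>i<N. f i * (if i = m then 1 else if Suc i = m then c else 0))
     = (\<Sum>i<N. (if i = m then f i else 0) + (if i = m - 1 \<and> m > 0 then c * f i else 0))"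
    by (rule sum.cong) auto
  also have "\<dots> = f m + (if m > 0 then c * f (m - 1) else 0)"
    using assms by (simp add: sum.distrib sum.delta)
  finally show ?thesis .
qed

lemma det_diag:
  fixes d :: "nat \<Rightarrow> 'a::comm_ring_1"
  shows "det (mat n n (\<lambda>(i,j). if i = j then d i else 0)) = (\<Prod>i<n. d i)"
  by (subst det_upper_triangular[of _ n]) (auto simp: upper_triangular_def prod_list_diag_prod atLeast0LessThan)

lemma vandermonde:
  fixes x :: "nat \<Rightarrow> 'a::comm_ring_1"
  shows "det (mat n n (\<lambda>(k,m). x k ^ m)) = vand n x"
proof (induction n arbitrary: x)
  case 0
  then show ?case by (simp add: vand_def det_def)
next
  case (Suc n)
  define V where "V = mat (Suc n) (Suc n) (\<lambda>(k,m). x k ^ m)"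
  define U where "U = mat (Suc n) (Suc n) (\<lambda>(i,j). if i = j then 1 else if Suc i = j then - x 0 else (0::'a))"
  have V: "V \<in> carrier_mat (Suc n) (Suc n)" and U: "U \<in> carrier_mat (Suc n) (Suc n)"
    unfolding V_def U_def by auto
  have dU: "det U = 1"
    by (subst det_upper_triangular[of _ "Suc n"]) (auto simp: U_def upper_triangular_def prod_list_diag_prod)
  define W where "W = V * U"
  have W: "W \<in> carrier_mat (Suc n) (Suc n)" using V U unfolding W_def by auto
  have Wij: "W $$ (k, m) = x k ^ m - (if m > 0 then x 0 * x k ^ (m - 1) else 0)"
    if "k < Suc n" "m < Suc n" for k m
  proof -
    have "W $$ (k, m) = (\<Sum>i<Suc n. x k ^ i * (if i = m then 1 else if Suc i = m then - x 0 else 0))"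
      using that unfolding W_def V_def U_def
      by (simp add: scalar_prod_def atLeast0LessThan)
    also have "\<dots> = x k ^ m + (if m > 0 then - x 0 * x k ^ (m - 1) else 0)"
      by (rule sum_two_delta[OF that(2)])
    finally show ?thesis by simp
  qed
  have detW: "det W = det V" unfolding W_def using det_mult[OF V U] dU by simp
  have "det W = (\<Sum>j<Suc n. W $$ (0,j) * cofactor W 0 j)"
    by (rule laplace_expansion_row[OF W]) simp
  also have "\<dots> = W $$ (0,0) * cofactor W 0 0"
  proof -
    have "(\<Sum>j<Suc n. W $$ (0,j) * cofactor W 0 j) = W $$ (0,0) * cofactor W 0 0 + (\<Sum>j<n. W $$ (0,Suc j) * cofactor W 0 (Suc j))"
      by (rule sum.lessThan_Suc_shift)
    also have "(\<Sum>j<n. W $$ (0,Suc j) * cofactor W 0 (Suc j)) = 0"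
      using Wij by (intro sum.neutral) simp
    finally show ?thesis by simp
  qed
  also have "\<dots> = det (mat_delete W 0 0)" using Wij by (simp add: cofactor_def)
  also have "mat_delete W 0 0 = mat n n (\<lambda>(i,j). if i = j then x (Suc i) - x 0 else 0) * mat n n (\<lambda>(k,m). x (Suc k) ^ m)"
  proof (rule eq_matI)
    fix i j assume ij: "i < dim_row (mat n n (\<lambda>(i,j). if i = j then x (Suc i) - x 0 else 0) * mat n n (\<lambda>(k,m). x (Suc k) ^ m))"
      "j < dim_col (mat n n (\<lambda>(i,j). if i = j then x (Suc i) - x 0 else 0) * mat n n (\<lambda>(k,m). x (Suc k) ^ m))"
    hence i: "i < n" and j: "j < n" by auto
    have "(mat n n (\<lambda>(i,j). if i = j then x (Suc i) - x 0 else 0) * mat n n (\<lambda>(k,m). x (Suc k) ^ m)) $$ (i,j)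
      = (\<Sum>l\<in>{0..<n}. (if i = l then x (Suc i) - x 0 else 0) * x (Suc l) ^ j)"
      using i j by (simp add: scalar_prod_def)
    also have "\<dots> = (x (Suc i) - x 0) * x (Suc i) ^ j"
      using i by (simp add: sum.delta if_distrib[of "\<lambda>t. t * _"] cong: if_cong)
    moreover have "mat_delete W 0 0 $$ (i, j) = (x (Suc i) - x 0) * x (Suc i) ^ j"
      using i j Wij[of "Suc i" "Suc j"] W by (simp add: mat_delete_def algebra_simps)
    ultimately show "mat_delete W 0 0 $$ (i, j) = (mat n n (\<lambda>(i,j). if i = j then x (Suc i) - x 0 else 0) * mat n n (\<lambda>(k,m). x (Suc k) ^ m)) $$ (i,j)"
      by simp
  qed (use W in auto)
  also have "det \<dots> = (\<Prod>i<n. x (Suc i) - x 0) * vand n (\<lambda>k. x (Suc k))"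
    by (subst det_mult[of _ n]) (auto simp: det_diag Suc.IH)
  also have "\<dots> = vand (Suc n) x"
  proof -
    have "vand (Suc n) x = (\<Prod>j<n. \<Prod>i<Suc j. x (Suc j) - x i)"
      unfolding vand_def by (subst prod.lessThan_Suc_shift) simp
    also have "\<dots> = (\<Prod>j<n. (x (Suc j) - x 0) * (\<Prod>i<j. x (Suc j) - x (Suc i)))"
      by (rule prod.cong[OF refl], subst prod.lessThan_Suc_shift) simp
    finally show ?thesis unfolding vand_def by (simp add: prod.distrib)
  qed
  finally show ?case using detW V_def by simp
qed


definition pp :: "nat \<Rightarrow> nat \<Rightarrow> rat poly" where
  "pp n j = smult (2^j) (\<Prod>k<j. [:of_nat (2*k+1), 2:]) * (\<Prod>m<n-j-1. [:of_nat (j+2+m), 1:])"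

definition ww :: "nat \<Rightarrow> nat \<Rightarrow> rat" where
  "ww n a = fact (2*a) / (fact a * fact (a+n))"

lemma poly_pp: "poly (pp n j) x = 2^j * (\<Prod>k<j. 2*x + of_nat (2*k+1)) * (\<Prod>m<n-j-1. x + of_nat (j+2+m))"
  unfolding pp_def by (simp add: poly_prod algebra_simps)

lemma degree_pp: assumes "j < n" shows "degree (pp n j) \<le> n - 1"
proof -
  have "degree (pp n j) \<le> degree (smult (2^j) (\<Prod>k<j. [:of_nat (2*k+1), 2:]::rat poly)) + degree (\<Prod>m<n-j-1. [:of_nat (j+2+m), 1:]::rat poly)"
    unfolding pp_def by (rule degree_mult_le)
  also have "degree (smult (2^j) (\<Prod>k<j. [:of_nat (2*k+1), 2:]::rat poly)) \<le> j"
  proof -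
    have "degree (\<Prod>k<j. [:of_nat (2*k+1), 2:]::rat poly) \<le> sum (degree \<circ> (\<lambda>k. [:of_nat (2*k+1), 2:]::rat poly)) {..<j}"
      by (rule degree_prod_sum_le) simp
    also have "\<dots> \<le> sum (\<lambda>_. 1) {..<j}" by (rule sum_mono) simp
    finally show ?thesis by (simp add: degree_smult_le order_trans[OF degree_smult_le])
  qed
  also have "degree (\<Prod>m<n-j-1. [:of_nat (j+2+m), 1:]::rat poly) \<le> n-j-1"
  proof -
    have "degree (\<Prod>m<n-j-1. [:of_nat (j+2+m), 1:]::rat poly) \<le> sum (degree \<circ> (\<lambda>m. [:of_nat (j+2+m), 1:]::rat poly)) {..<n-j-1}"
      by (rule degree_prod_sum_le) simp
    also have "\<dots> \<le> sum (\<lambda>_. 1) {..<n-j-1}" by (rule sum_mono) simp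
    finally show ?thesis by simp
  qed
  finally show ?thesis using assms by linarith
qed

lemma poly_pp_sum: assumes "j < n" shows "poly (pp n j) x = (\<Sum>m<n. coeff (pp n j) m * x ^ m)"
proof -
  have "poly (pp n j) x = (\<Sum>m\<le>degree (pp n j). coeff (pp n j) m * x ^ m)" by (rule poly_altdef)
  also have "\<dots> = (\<Sum>m<n. coeff (pp n j) m * x ^ m)"
    using degree_pp[OF assms] assms
    by (intro sum.mono_neutral_left) (auto simp: coeff_eq_0)
  finally show ?thesis .
qed

lemma catalan_fact: "catalan m = fact (2*m) / (fact m * fact (Suc m))"
proof -
  define C where "C = (of_nat ((2*m) choose m) :: rat)"
  have h: "fact (2*m) = fact m * fact m * C" unfolding C_def
    by (subst binomial_fact) (auto simp: mult_2)
  have f: "fact (Suc m) = (of_nat m + 1) * (fact m :: rat)" by simp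
  have "catalan m = C / (of_nat m + 1)" unfolding catalan_def C_def by simp
  also have "\<dots> = (fact m * fact m) * C / ((fact m * fact m) * (of_nat m + 1))"
    by (subst mult_divide_mult_cancel_left) auto
  also have "\<dots> = fact m * fact m * C / (fact m * ((of_nat m + 1) * fact m))"
    by (simp add: mult_ac)
  finally show ?thesis unfolding h f .
qed

lemma L1: "fact (2*a+2*j) * fact a = (fact (2*a) * fact (a+j) * 2^j * (\<Prod>k<j. 2 * of_nat a + of_nat (2*k+1)) :: rat)"
proof (induction j)
  case 0 then show ?case by simp
next
  case (Suc j)
  define P where "P = (\<Prod>k<j. 2 * of_nat a + of_nat (2*k+1) :: rat)"
  have e1: "fact (2*a+2*Suc j) = (fact (2*a+2*j) * (of_nat (2*a+2*j+1)) * of_nat (2*a+2*j+2) :: rat)"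
    by (simp add: algebra_simps)
  have e2: "fact (a + Suc j) = (of_nat (a+j+1) * fact (a+j) :: rat)" by simp
  have e3: "(\<Prod>k<Suc j. 2 * of_nat a + of_nat (2*k+1) :: rat) = P * (2 * of_nat a + of_nat (2*j+1))"
    unfolding P_def by simp
  have "fact (2*a+2*Suc j) * fact a = (fact (2*a+2*j) * fact a) * (of_nat (2*a+2*j+1)) * (of_nat (2*a+2*j+2) :: rat)"
    unfolding e1 by (simp add: algebra_simps)
  also have "\<dots> = fact (2*a) * fact (a+j) * 2^j * P * (of_nat (2*a+2*j+1)) * (of_nat (2*a+2*j+2))"
    using Suc unfolding P_def by simp
  also have "\<dots> = fact (2*a) * (of_nat (a+j+1) * fact (a+j)) * 2^Suc j * (P * (2 * of_nat a + of_nat (2*j+1)))"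
    by (simp add: algebra_simps)
  finally show ?case unfolding e2 e3 .
qed

lemma L2: "fact (a+j+1+d) = (fact (a+j+1) * (\<Prod>m<d. of_nat a + of_nat (j+2+m)) :: rat)"
  by (induction d) (simp_all add: algebra_simps)

lemma catalan_factor: assumes "j < n"
  shows "catalan (a+j) = ww n a * poly (pp n j) (of_nat a)"
proof -
  define P where "P = (\<Prod>k<j. 2 * of_nat a + of_nat (2*k+1) :: rat)"
  define Q where "Q = (\<Prod>m<n-j-1. of_nat a + of_nat (j+2+m) :: rat)"
  have Q: "fact (a+n) = fact (a+j+1) * Q" unfolding Q_def using L2[of a j "n-j-1"] assms
    by (simp add: algebra_simps)
  have P: "fact (2*a+2*j) * fact a = fact (2*a) * fact (a+j) * 2^j * P" unfolding P_def by (rule L1)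
  have Qnz: "Q \<noteq> 0" using Q by auto
  have "poly (pp n j) (of_nat a) = 2^j * P * Q" unfolding poly_pp P_def Q_def by simp
  hence "ww n a * poly (pp n j) (of_nat a) = fact (2*a) * 2^j * P * Q / (fact a * (fact (a+j+1) * Q))"
    unfolding ww_def Q by simp
  also have "\<dots> = fact (2*a) * 2^j * P / fact a / fact (a+j+1)"
    using Qnz by simp
  also have "fact (2*a) * 2^j * P / fact a = fact (2*a+2*j) / fact (a+j)"
    using P by (simp add: divide_simps)
  also have "fact (2*a+2*j) / fact (a+j) / fact (a+j+1) = (fact (2*(a+j)) / (fact (a+j) * fact (Suc (a+j))) :: rat)"
    unfolding divide_divide_eq_left by (simp add: algebra_simps del: fact_Suc)
  finally show ?thesis by (simp add: catalan_fact)
qed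


definition Amat :: "nat \<Rightarrow> rat mat" where
  "Amat n = mat n n (\<lambda>(m,j). coeff (pp n j) m)"

lemma det_poly_mat: "det (mat n n (\<lambda>(k,j). poly (pp n j) (x k))) = vand n x * det (Amat n)"
proof -
  have "mat n n (\<lambda>(k,j). poly (pp n j) (x k)) = mat n n (\<lambda>(k,m). x k ^ m) * Amat n"
    by (rule eq_matI) (auto simp: Amat_def scalar_prod_def poly_pp_sum atLeast0LessThan mult_ac)
  thus ?thesis by (simp add: det_mult[of _ n] vandermonde Amat_def)
qed

lemma D1: "(\<Prod>k<j. of_nat (2*k+1) - 2*(of_nat j+1) :: rat) = (-1)^j * (\<Prod>k<j. of_nat (2*k+3))"
proof -
  have "(\<Prod>k<j. of_nat (2*k+1) - 2*(of_nat j+1) :: rat) = (\<Prod>k<j. of_nat (2*(j - Suc k)+1) - 2*(of_nat j+1))"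
    by (rule prod.nat_diff_reindex[symmetric])
  also have "\<dots> = (\<Prod>k<j. (-1) * of_nat (2*k+3))"
    by (rule prod.cong) (auto simp: of_nat_diff algebra_simps)
  also have "\<dots> = (-1)^j * (\<Prod>k<j. of_nat (2*k+3))"
    by (simp only: prod.distrib prod_constant card_lessThan)
  finally show ?thesis .
qed

lemma D2: "(\<Prod>m<d. of_nat (j+2+m) - (of_nat j+1) :: rat) = fact d"
proof -
  have "(\<Prod>m<d. of_nat (j+2+m) - (of_nat j+1) :: rat) = (\<Prod>m<d. of_nat (Suc m))"
    by (rule prod.cong) auto
  thus ?thesis by (simp add: fact_prod_Suc lessThan_atLeast0)
qed

lemma E1: "2^j * (\<Prod>k<j. of_nat (2*k+3)) * fact j = (fact (2*j+1) :: rat)"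
proof (induction j)
  case 0 then show ?case by simp
next
  case (Suc j)
  have "2^Suc j * (\<Prod>k<Suc j. of_nat (2*k+3)) * fact (Suc j) = (2^j * (\<Prod>k<j. of_nat (2*k+3)) * fact j) * (of_nat (2*j+2) * (of_nat (2*j+3) :: rat))"
    by (simp add: algebra_simps)
  also have "\<dots> = fact (2*j+1) * (of_nat (2*j+2) * of_nat (2*j+3))" using Suc by simp
  also have "\<dots> = fact (Suc (Suc (2*j+1)))" by (simp add: algebra_simps)
  finally show ?case by simp
qed

lemma V1: "(\<Prod>i<j. (of_nat i - of_nat j) :: rat) = (-1)^j * fact j"
proof -
  have "(\<Prod>i<j. (of_nat i - of_nat j) :: rat) = (\<Prod>i<j. of_nat (j - Suc i) - of_nat j)"
    by (rule prod.nat_diff_reindex[symmetric])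
  also have "\<dots> = (\<Prod>i<j. (-1) * of_nat (Suc i))"
    by (rule prod.cong) (auto simp: of_nat_diff algebra_simps)
  also have "\<dots> = (-1)^j * (\<Prod>i<j. of_nat (Suc i))"
    by (simp only: prod.distrib prod_constant card_lessThan)
  finally show ?thesis by (simp add: fact_prod_Suc lessThan_atLeast0)
qed

lemma H1: "(\<Prod>j<Suc n. fact (j + Suc n) :: nat) * fact n = (\<Prod>j<n. fact (j + n)) * fact (2*n) * fact (2*n+1)"
proof -
  have "(\<Prod>j<Suc (Suc n). fact (j + n) :: nat) = fact n * (\<Prod>j<Suc n. fact (Suc j + n))"
    by (subst prod.lessThan_Suc_shift) simp
  moreover have "(\<Prod>j<Suc (Suc n). fact (j + n) :: nat) = (\<Prod>j<n. fact (j + n)) * fact (2*n) * fact (2*n+1)"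
    by (simp add: mult_2)
  ultimately show ?thesis by (simp add: mult_ac)
qed

lemma E3: "(\<Prod>j<n. fact (2*j+1) * fact (2*j) :: nat) = (\<Prod>j<n. fact j) * (\<Prod>j<n. fact (j+n))"
proof (induction n)
  case 0 then show ?case by simp
next
  case (Suc n)
  have "(\<Prod>j<Suc n. fact j :: nat) * (\<Prod>j<Suc n. fact (j + Suc n)) = (\<Prod>j<n. fact j) * ((\<Prod>j<Suc n. fact (j + Suc n)) * fact n)"
    by (simp add: mult_ac)
  also have "\<dots> = ((\<Prod>j<n. fact j) * (\<Prod>j<n. fact (j + n))) * fact (2*n) * fact (2*n+1)"
    unfolding H1 by (simp add: mult_ac)
  finally show ?case using Suc by (simp add: mult_ac)
qed

lemma detA: "det (Amat n) = (\<Prod>i<n. fact (i + n) / fact (2 * i))"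
proof -
  define x where "x = (\<lambda>k. - (of_nat k + 1) :: rat)"
  define M where "M = mat n n (\<lambda>(k,j). poly (pp n j) (x k))"
  have ut: "upper_triangular M"
    unfolding upper_triangular_def M_def
  proof (intro allI impI)
    fix k j assume k: "k < dim_row (mat n n (\<lambda>(k,j). poly (pp n j) (x k)))" and jk: "j < k"
    hence kn: "k < n" by simp
    have "(\<Prod>m<n-j-1. x k + of_nat (j+2+m)) = 0"
      by (rule prod_zero) (use kn jk in \<open>auto simp: x_def intro!: bexI[of _ "k-j-1"]\<close>)
    thus "mat n n (\<lambda>(k,j). poly (pp n j) (x k)) $$ (k, j) = 0"
      using kn jk by (simp add: poly_pp)
  qed
  have dM: "det M = (\<Prod>j<n. (-1)^j * (fact (2*j+1) / fact j)) * (\<Prod>j<n. fact j)"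
  proof -
    have "det M = (\<Prod>j<n. poly (pp n j) (x j))"
      by (subst det_upper_triangular[OF ut, of n]) (auto simp: M_def prod_list_diag_prod atLeast0LessThan)
    also have "\<dots> = (\<Prod>j<n. (-1)^j * (fact (2*j+1) / fact j) * fact (n - Suc j))"
    proof (rule prod.cong[OF refl])
      fix j assume "j \<in> {..<n}"
      have a: "(\<Prod>k<j. 2 * x j + of_nat (2*k+1)) = (-1)^j * (\<Prod>k<j. of_nat (2*k+3))"
        using D1[of j] unfolding x_def by (simp add: algebra_simps)
      have b: "(\<Prod>m<n-j-1. x j + of_nat (j+2+m)) = fact (n - Suc j)"
        using D2[of j "n-j-1"] unfolding x_def by (simp add: algebra_simps)
      have c: "2^j * (\<Prod>k<j. of_nat (2*k+3)) = (fact (2*j+1) / fact j :: rat)"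
        using E1[of j] by (simp add: field_simps)
      show "poly (pp n j) (x j) = (-1)^j * (fact (2*j+1) / fact j) * fact (n - Suc j)"
        unfolding poly_pp a b using c by (simp add: mult_ac)
    qed
    also have "\<dots> = (\<Prod>j<n. (-1)^j * (fact (2*j+1) / fact j)) * (\<Prod>j<n. fact (n - Suc j))"
      by (simp only: prod.distrib)
    also have "(\<Prod>j<n. fact (n - Suc j) :: rat) = (\<Prod>j<n. fact j)"
      by (rule prod.nat_diff_reindex)
    finally show ?thesis .
  qed
  have vx: "vand n x = (\<Prod>j<n. (-1)^j * fact j)"
    unfolding vand_def
    by (rule prod.cong[OF refl]) (use V1 in \<open>simp add: x_def\<close>)
  have dP: "det M = vand n x * det (Amat n)" unfolding M_def by (rule det_poly_mat)
  hence "(\<Prod>j<n. (-1)^j * fact j) * det (Amat n) = (\<Prod>j<n. (-1)^j * fact j) * (\<Prod>j<n. fact (2*j+1) / fact j)"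
  proof -
    have "(\<Prod>j<n. (-1)^j * fact j) * det (Amat n) = det M" unfolding vx[symmetric] using dP by simp
    also have "\<dots> = (\<Prod>j<n. (-1)^j :: rat) * (\<Prod>j<n. fact (2*j+1) / fact j) * (\<Prod>j<n. fact j)"
      unfolding dM by (simp only: prod.distrib)
    also have "\<dots> = (\<Prod>j<n. (-1)^j * fact j) * (\<Prod>j<n. fact (2*j+1) / fact j)"
      by (simp only: prod.distrib mult_ac)
    finally show ?thesis .
  qed
  moreover have "(\<Prod>j<n. (-1)^j * fact j :: rat) \<noteq> 0" by simp
  ultimately have "det (Amat n) = (\<Prod>j<n. fact (2*j+1) / fact j)" by simp
  also have "\<dots> = (\<Prod>i<n. fact (i + n) / fact (2 * i))"
  proof -
    have "of_nat (\<Prod>j<n. fact (2*j+1) * fact (2*j) :: nat) = (of_nat ((\<Prod>j<n. fact j) * (\<Prod>j<n. fact (j+n))) :: rat)"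
      using E3 by metis
    hence e: "(\<Prod>j<n. fact (2*j+1)) * (\<Prod>j<n. fact (2*j)) = (\<Prod>j<n. fact j) * (\<Prod>j<n. fact (j+n) :: rat)"
      by (simp only: of_nat_mult of_nat_prod of_nat_fact prod.distrib)
    have "(\<Prod>j<n. fact (2*j+1) / fact j) = (\<Prod>j<n. fact (2*j+1)) / (\<Prod>j<n. fact j :: rat)"
      by (rule prod_dividef)
    also have "\<dots> = (\<Prod>j<n. fact (j+n)) / (\<Prod>j<n. fact (2*j) :: rat)"
      using e by (simp add: divide_simps mult_ac del: fact_Suc)
    also have "\<dots> = (\<Prod>i<n. fact (i + n) / fact (2 * i))"
      by (rule prod_dividef[symmetric])
    finally show ?thesis .
  qed
  finally show ?thesis .
qed


definition skip :: "nat \<Rightarrow> nat \<Rightarrow> nat" where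
  "skip s i = (if i < s then i else Suc i)"

lemma inj_skip: "inj (skip s)"
  unfolding inj_def skip_def by auto

lemma skip_img: assumes "s \<le> n" shows "skip s ` {..<n} = {..n} - {s}"
proof
  show "skip s ` {..<n} \<subseteq> {..n} - {s}" using assms unfolding skip_def by auto
  show "{..n} - {s} \<subseteq> skip s ` {..<n}"
  proof
    fix x assume x: "x \<in> {..n} - {s}"
    show "x \<in> skip s ` {..<n}"
    proof (cases "x < s")
      case True thus ?thesis using x assms by (intro image_eqI[of _ _ x]) (auto simp: skip_def)
    next
      case False thus ?thesis using x assms by (intro image_eqI[of _ _ "x - 1"]) (auto simp: skip_def)
    qed
  qed
qed

lemma skip_img2: "skip s ` {..<j} = {..<skip s j} - {s}"
proof
  show "skip s ` {..<j} \<subseteq> {..<skip s j} - {s}" unfolding skip_def by auto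
  show "{..<skip s j} - {s} \<subseteq> skip s ` {..<j}"
  proof
    fix x assume x: "x \<in> {..<skip s j} - {s}"
    show "x \<in> skip s ` {..<j}"
    proof (cases "x < s")
      case True thus ?thesis using x by (intro image_eqI[of _ _ x]) (auto simp: skip_def split: if_splits)
    next
      case False thus ?thesis using x by (intro image_eqI[of _ _ "x - 1"]) (auto simp: skip_def split: if_splits)
    qed
  qed
qed

lemma prod_skip: "s \<le> n \<Longrightarrow> (\<Prod>i<n. f (skip s i)) = (\<Prod>i\<in>{..n}-{s}. f i)"
proof -
  assume "s \<le> n"
  have "(\<Prod>i\<in>{..n}-{s}. f i) = (\<Prod>i\<in>skip s ` {..<n}. f i)" using skip_img[OF \<open>s \<le> n\<close>] by simp
  also have "\<dots> = (\<Prod>i<n. f (skip s i))"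
    by (subst prod.reindex) (use inj_skip in \<open>auto intro: inj_on_subset\<close>)
  finally show ?thesis by simp
qed

lemma vand_skip: assumes "s \<le> n"
  shows "vand n (\<lambda>i. a (skip s i)) = (\<Prod>j\<in>{..n}-{s}. \<Prod>i\<in>{..<j}-{s}. (a j - a i))"
proof -
  have "vand n (\<lambda>i. a (skip s i)) = (\<Prod>j<n. \<Prod>i<j. a (skip s j) - a (skip s i))" unfolding vand_def ..
  also have "\<dots> = (\<Prod>j<n. \<Prod>i\<in>{..<skip s j}-{s}. a (skip s j) - a i)"
  proof (rule prod.cong[OF refl])
    fix j
    show "(\<Prod>i<j. a (skip s j) - a (skip s i)) = (\<Prod>i\<in>{..<skip s j}-{s}. a (skip s j) - a i)"
      unfolding skip_img2[symmetric]
      by (subst prod.reindex) (use inj_skip in \<open>auto intro: inj_on_subset\<close>)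
  qed
  also have "\<dots> = (\<Prod>j\<in>{..n}-{s}. \<Prod>i\<in>{..<j}-{s}. (a j - a i))"
    by (rule prod_skip[OF assms, where f = "\<lambda>j. \<Prod>i\<in>{..<j}-{s}. (a j - a i)"])
  finally show ?thesis .
qed

lemma minor_det:
  "det (mat n n (\<lambda>(i,j). catalan (\<alpha> (skip s i) + j))) =
    (\<Prod>i<n. ww n (\<alpha> (skip s i))) * vand n (\<lambda>i. of_nat (\<alpha> (skip s i))) * det (Amat n)"
proof -
  have "mat n n (\<lambda>(i,j). catalan (\<alpha> (skip s i) + j)) =
     mat n n (\<lambda>(i,j). if i = j then ww n (\<alpha> (skip s i)) else 0) * mat n n (\<lambda>(k,j). poly (pp n j) (of_nat (\<alpha> (skip s k))))"
  proof (rule eq_matI)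
    fix i j assume "i < dim_row (mat n n (\<lambda>(i,j). if i = j then ww n (\<alpha> (skip s i)) else 0) * mat n n (\<lambda>(k,j). poly (pp n j) (of_nat (\<alpha> (skip s k)))))"
      "j < dim_col (mat n n (\<lambda>(i,j). if i = j then ww n (\<alpha> (skip s i)) else 0) * mat n n (\<lambda>(k,j). poly (pp n j) (of_nat (\<alpha> (skip s k)))))"
    hence i: "i < n" and j: "j < n" by auto
    have "(mat n n (\<lambda>(i,j). if i = j then ww n (\<alpha> (skip s i)) else 0) * mat n n (\<lambda>(k,j). poly (pp n j) (of_nat (\<alpha> (skip s k))))) $$ (i,j)
      = (\<Sum>l\<in>{0..<n}. (if i = l then ww n (\<alpha> (skip s i)) else 0) * poly (pp n j) (of_nat (\<alpha> (skip s l))))"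
      using i j by (simp add: scalar_prod_def)
    also have "\<dots> = ww n (\<alpha> (skip s i)) * poly (pp n j) (of_nat (\<alpha> (skip s i)))"
      using i by (simp add: sum.delta if_distrib[of "\<lambda>t. t * _"] cong: if_cong)
    also have "\<dots> = catalan (\<alpha> (skip s i) + j)" using catalan_factor[OF j] by simp
    finally show "mat n n (\<lambda>(i,j). catalan (\<alpha> (skip s i) + j)) $$ (i,j) = (mat n n (\<lambda>(i,j). if i = j then ww n (\<alpha> (skip s i)) else 0) * mat n n (\<lambda>(k,j). poly (pp n j) (of_nat (\<alpha> (skip s k))))) $$ (i,j)"
      using i j by simp
  qed auto
  thus ?thesis
    by (simp add: det_mult[of _ n] det_diag det_poly_mat mult_ac)
qed


lemma sum_adj:
  fixes f :: "nat \<Rightarrow> 'a::comm_ring_1"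
  assumes "k < N"
  shows "(\<Sum>l<N. (if k = l \<or> Suc k = l then 1 else 0) * f l) = f k + (if Suc k < N then f (Suc k) else 0)"
proof -
  have "(\<Sum>l<N. (if k = l \<or> Suc k = l then 1 else 0) * f l) = (\<Sum>l<N. (if l = k then f l else 0) + (if l = Suc k then f l else 0))"
    by (rule sum.cong) auto
  also have "\<dots> = f k + (if Suc k < N then f (Suc k) else 0)"
    using assms by (simp add: sum.distrib sum.delta)
  finally show ?thesis .
qed

lemma expand:
  fixes R :: "nat \<Rightarrow> nat \<Rightarrow> rat"
  shows "det (mat n n (\<lambda>(i,j). R i j + R (i+1) j)) = (\<Sum>s\<le>n. det (mat n n (\<lambda>(i,j). R (skip s i) j)))"
proof -
  define G where "G = mat (Suc n) (Suc n) (\<lambda>(k,j). if j = 0 then (-1)^k else R k (j-1))"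
  define L where "L = mat (Suc n) (Suc n) (\<lambda>(i,j). if i = j \<or> Suc i = j then 1 else (0::rat))"
  have G: "G \<in> carrier_mat (Suc n) (Suc n)" and L: "L \<in> carrier_mat (Suc n) (Suc n)"
    unfolding G_def L_def by auto
  have dL: "det L = 1"
    by (subst det_upper_triangular[of _ "Suc n"]) (auto simp: L_def upper_triangular_def prod_list_diag_prod)
  define H where "H = L * G"
  have H: "H \<in> carrier_mat (Suc n) (Suc n)" using L G unfolding H_def by auto
  have Hij: "H $$ (k, m) = G $$ (k, m) + (if Suc k < Suc n then G $$ (Suc k, m) else 0)"
    if "k < Suc n" "m < Suc n" for k m
  proof -
    have "H $$ (k, m) = (\<Sum>l<Suc n. (if k = l \<or> Suc k = l then 1 else 0) * G $$ (l, m))"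
      using that G unfolding H_def L_def
      by (simp add: scalar_prod_def atLeast0LessThan)
    also have "\<dots> = G $$ (k, m) + (if Suc k < Suc n then G $$ (Suc k, m) else 0)"
      by (rule sum_adj[OF that(1)])
    finally show ?thesis .
  qed
  have "det H = det G" unfolding H_def using det_mult[OF L G] dL by simp
  have "det H = (\<Sum>k<Suc n. H $$ (k,0) * cofactor H k 0)"
    by (rule laplace_expansion_column[OF H]) simp
  also have "\<dots> = H $$ (n,0) * cofactor H n 0"
  proof -
    have "(\<Sum>k<n. H $$ (k,0) * cofactor H k 0) = 0"
      using Hij by (intro sum.neutral) (simp add: G_def)
    thus ?thesis by simp
  qed
  also have "\<dots> = det (mat_delete H n 0)"
    using Hij[of n 0] by (simp add: G_def cofactor_def)
  also have "mat_delete H n 0 = mat n n (\<lambda>(i,j). R i j + R (i+1) j)"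
    by (rule eq_matI) (use H in \<open>auto simp: mat_delete_def Hij G_def\<close>)
  finally have e1: "det (mat n n (\<lambda>(i,j). R i j + R (i+1) j)) = det G" using \<open>det H = det G\<close> by simp
  have "det G = (\<Sum>k<Suc n. G $$ (k,0) * cofactor G k 0)"
    by (rule laplace_expansion_column[OF G]) simp
  also have "\<dots> = (\<Sum>k<Suc n. det (mat n n (\<lambda>(i,j). R (skip k i) j)))"
  proof (rule sum.cong[OF refl])
    fix k assume k: "k \<in> {..<Suc n}"
    have "mat_delete G k 0 = mat n n (\<lambda>(i,j). R (skip k i) j)"
      by (rule eq_matI) (use G in \<open>auto simp: mat_delete_def G_def skip_def\<close>)
    thus "G $$ (k,0) * cofactor G k 0 = det (mat n n (\<lambda>(i,j). R (skip k i) j))"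
      using k by (simp add: G_def cofactor_def)
  qed
  finally show ?thesis using e1 by (simp add: lessThan_Suc_atMost)
qed


theorem corollary5:
  fixes n :: nat and \<alpha> :: "nat \<Rightarrow> nat"
  assumes "n \<ge> 1"
  shows "det (mat n n (\<lambda>(i, j). catalan (\<alpha> i + j) + catalan (\<alpha> (i + 1) + j)))
    = (\<Prod>i<n. fact (i + n) / fact (2 * i))
      * (\<Prod>i\<le>n. fact (2 * \<alpha> i) / (fact (\<alpha> i) * fact (\<alpha> i + n)))
      * (\<Sum>s\<le>n. (\<Prod>j\<in>{..n} - {s}. \<Prod>i\<in>{..<j} - {s}. (of_nat (\<alpha> j) - of_nat (\<alpha> i)))
                   * (fact (\<alpha> s) * fact (\<alpha> s + n) / fact (2 * \<alpha> s)))"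
proof -
  define V where "V = (\<lambda>s. (\<Prod>j\<in>{..n} - {s}. \<Prod>i\<in>{..<j} - {s}. (of_nat (\<alpha> j) - of_nat (\<alpha> i) :: rat)))"
  define c where "c = (\<Prod>i<n. fact (i + n) / fact (2 * i) :: rat)"
  define W where "W = (\<Prod>i\<le>n. ww n (\<alpha> i))"
  have wnz: "ww n a \<noteq> 0" for a unfolding ww_def by simp
  have "det (mat n n (\<lambda>(i, j). catalan (\<alpha> i + j) + catalan (\<alpha> (i + 1) + j)))
      = (\<Sum>s\<le>n. det (mat n n (\<lambda>(i,j). catalan (\<alpha> (skip s i) + j))))"
    by (rule expand[where R = "\<lambda>i j. catalan (\<alpha> i + j)"])
  also have "\<dots> = (\<Sum>s\<le>n. c * W * (V s * (1 / ww n (\<alpha> s))))"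
  proof (rule sum.cong[OF refl])
    fix s assume s: "s \<in> {..n}"
    have W: "W = ww n (\<alpha> s) * (\<Prod>i\<in>{..n}-{s}. ww n (\<alpha> i))"
      unfolding W_def using s by (simp add: prod.remove)
    show "det (mat n n (\<lambda>(i,j). catalan (\<alpha> (skip s i) + j))) = c * W * (V s * (1 / ww n (\<alpha> s)))"
      unfolding minor_det detA c_def[symmetric] W V_def
      using s wnz[of "\<alpha> s"] prod_skip[of s n "\<lambda>i. ww n (\<alpha> i)"]
      by (simp add: vand_skip[where a = "\<lambda>i. of_nat (\<alpha> i)"])
  qed
  also have "\<dots> = c * W * (\<Sum>s\<le>n. V s * (1 / ww n (\<alpha> s)))"
    by (simp add: sum_distrib_left)
  finally show ?thesis
    unfolding c_def W_def V_def ww_def by simp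
qed

end
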